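(* Let $1\le p<\infty$ and $\eta\in(0,1)$. There exist $\beta\in(1/2,1)$ and $C_1>0$, depending only on $\eta$, such that for every $\varepsilon>0$, every $f\in\mathcal{H}(\mathbb{D})$ and every $\xi\in\mathbb{T}$, setting $$\mathcal{A}=\Big\{\alpha\in\mathbb{D}:\ |f(\alpha)|^p<\frac{\varepsilon}{m(\Delta_\eta(\alpha))}\int_{\Delta_\eta(\alpha)}|f(z)|^p\,dm(z)\Big\},$$ we have $$\int_{\mathcal{A}\cap\Gamma_{1/2}(\xi)}|f(z)|^p\frac{dm(z)}{1-|z|}\ \le\ \varepsilon\, C_1\int_{\Gamma_\beta(\xi)}|f(z)|^p\frac{dm(z)}{1-|z|}.$$
   Context: $\mathbb{D}$ is the unit disc, $\mathbb{T}$ the unit circle, $dm$ normalized area measure, $\mathcal{H}(\mathbb{D})$ the analytic functions on $\mathbb{D}$. For $\beta\in(0,1)$ and $\xi\in\mathbb{T}$, $\Gamma_\beta(\xi)=\{z\in\mathbb{D}:|z|<\beta\}\cup\bigcup_{|z|<\beta}[z,\xi)$, where $[z,\xi)$ is the half-open segment from $z$ to $\xi$. For $\alpha\in\mathbb{D}$, $\Delta_\eta(\alpha)=\{z\in\mathbb{D}:|z-\alpha|<\eta(1-|\alpha|)\}$. *)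

theory Defs
  imports "HOL-Complex_Analysis.Complex_Analysis"
begin

text \<open>Normalized area measure on the complex plane: Lebesgue measure divided by pi,
  so that the unit disc has measure 1.\<close>
definition area_m :: "complex measure" where
  "area_m = density lborel (\<lambda>_. ennreal (1 / pi))"

definition Gamma_reg :: "real \<Rightarrow> complex \<Rightarrow> complex set" where
  "Gamma_reg \<beta> \<xi> = {z. norm z < \<beta>} \<union> (\<Union>z\<in>{z. norm z < \<beta>}. closed_segment z \<xi> - {\<xi>})"

definition Delta_reg :: "real \<Rightarrow> complex \<Rightarrow> complex set" where
  "Delta_reg \<eta> \<alpha> = {z. norm (z - \<alpha>) < \<eta> * (1 - norm \<alpha>)}"

end

theory Submission imports Defs begin

lemma norm_w_sq:
  fixes z \<xi> :: complex and l :: real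
  assumes "norm \<xi> = 1"
  shows "norm (z + l *\<^sub>R (z - \<xi>))^2 = norm z^2 - l*(1 - norm z^2) + l*(1+l)*norm (\<xi> - z)^2"
proof -
  have h: "Re \<xi>^2 + Im \<xi>^2 = 1" using assms by (metis cmod_power2 power_one)
  have h': "Im \<xi> * Im \<xi> + Re \<xi> * Re \<xi> = 1" using h by (simp add: power2_eq_square)
  show ?thesis unfolding cmod_power2 by (simp add: algebra_simps power2_eq_square) (metis h' distrib_left mult.right_neutral)
qed

lemma stolz_in_Gamma:
  fixes z \<xi> :: complex and K :: real
  assumes xi: "norm \<xi> = 1" and z: "norm z < 1" and st: "norm (\<xi> - z) \<le> K*(1-norm z)" and K: "K \<ge> 1"
  shows "z \<in> Gamma_reg (1 - 1/(4*K^2)) \<xi>"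
proof -
  define \<mu> where "\<mu> = 1/K^2"
  have mu: "0 < \<mu>" "\<mu> \<le> 1" using K by (auto simp: \<mu>_def)
  have beq: "1 - 1/(4*K^2) = 1 - \<mu>/4" by (simp add: \<mu>_def)
  show ?thesis
  proof (cases "norm z < 3/4")
    case True
    then show ?thesis unfolding Gamma_reg_def beq using mu by auto
  next
    case False
    define \<delta> where "\<delta> = 1 - norm z"
    have d: "0 < \<delta>" "\<delta> \<le> 1/4" using z False by (auto simp: \<delta>_def)
    define l where "l = \<mu>/\<delta>"
    have l: "0 < l" using d mu by (simp add: l_def)
    define w where "w = z + l *\<^sub>R (z - \<xi>)"
    have dd: "norm (\<xi> - z)^2 \<le> K^2 * \<delta>^2"
    proof -
      have "norm (\<xi> - z) \<le> K*\<delta>" using st by (simp add: \<delta>_def)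
      hence "norm (\<xi> - z)^2 \<le> (K*\<delta>)^2" by (rule power_mono) simp
      thus ?thesis by (simp add: power_mult_distrib)
    qed
    have "norm w^2 = norm z^2 - l*(1 - norm z^2) + l*(1+l)*norm (\<xi> - z)^2"
      unfolding w_def by (rule norm_w_sq[OF xi])
    also have "\<dots> \<le> norm z^2 - l*(1 - norm z^2) + l*(1+l)*(K^2*\<delta>^2)"
      using dd l by (intro add_left_mono mult_left_mono) auto
    also have "l*(1+l)*(K^2*\<delta>^2) = \<delta> + \<mu>"
      using d K by (simp add: l_def \<mu>_def field_simps power2_eq_square)
    also have "norm z^2 - l*(1 - norm z^2) = (1-\<delta>)^2 - \<mu>*(2-\<delta>)"
      using d by (simp add: l_def \<delta>_def field_simps power2_eq_square)
    finally have "norm w^2 \<le> (1-\<delta>)^2 - \<mu>*(2-\<delta>) + (\<delta> + \<mu>)" .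
    also have "\<dots> < (1 - \<mu>/4)^2"
    proof -
      have "3/4*\<mu> \<le> (1-\<delta>)*(\<delta>+\<mu>)" using d mu by (intro mult_mono) auto
      moreover have "(1-\<delta>)^2 - \<mu>*(2-\<delta>) + (\<delta> + \<mu>) = 1 - (1-\<delta>)*(\<delta>+\<mu>)"
        by (simp add: power2_eq_square algebra_simps)
      moreover have "(1 - \<mu>/4)^2 = 1 - \<mu>/2 + \<mu>^2/16" by (simp add: power2_eq_square algebra_simps)
      moreover have "\<mu>^2 \<ge> 0" by simp
      ultimately show ?thesis using mu by linarith
    qed
    finally have "norm w < 1 - \<mu>/4"
      using mu by (metis power_less_imp_less_base[where n=2] diff_ge_0_iff_ge divide_le_eq_numeral1(1) dual_order.trans less_imp_le mult.commute mult_1 one_le_numeral)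
    moreover have "z \<in> closed_segment w \<xi> - {\<xi>}"
    proof -
      define u where "u = l/(1+l)"
      have "z = (1 - u) *\<^sub>R w + u *\<^sub>R \<xi>"
        using l unfolding u_def w_def by (simp add: field_simps scaleR_add_right scaleR_diff_right) (simp add: add_divide_distrib[symmetric] flip: scaleR_add_left)
      moreover have "0 \<le> u" "u \<le> 1" using l by (auto simp: u_def)
      ultimately have "z \<in> closed_segment w \<xi>" unfolding closed_segment_def by blast
      moreover have "z \<noteq> \<xi>" using z xi by auto
      ultimately show ?thesis by simp
    qed
    ultimately show ?thesis unfolding Gamma_reg_def beq by auto
  qed
qed

lemma G1:
  fixes \<alpha> \<xi> :: complex
  assumes xi: "norm \<xi> = 1" and a: "\<alpha> \<in> Gamma_reg (1/2) \<xi>"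
  shows "norm \<alpha> < 1 \<and> norm (\<xi> - \<alpha>) \<le> 3*(1 - norm \<alpha>)"
proof (cases "norm \<alpha> < 1/2")
  case True
  have "norm (\<xi> - \<alpha>) \<le> norm \<xi> + norm \<alpha>" by (rule norm_triangle_ineq4)
  then show ?thesis using True xi by auto
next
  case False
  then obtain w where w: "norm w < 1/2" "\<alpha> \<in> closed_segment w \<xi>" "\<alpha> \<noteq> \<xi>"
    using a unfolding Gamma_reg_def by auto
  then obtain t where t: "0 \<le> t" "t \<le> 1" "\<alpha> = (1 - t) *\<^sub>R w + t *\<^sub>R \<xi>"
    unfolding closed_segment_def by auto
  have t1: "t < 1" using t w(3) by (cases "t = 1") auto
  have "\<xi> - \<alpha> = (1-t) *\<^sub>R (\<xi> - w)" using t(3) by (simp add: algebra_simps)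
  hence "norm (\<xi> - \<alpha>) = (1-t) * norm (\<xi> - w)" using t1 by simp
  also have "norm (\<xi> - w) \<le> norm \<xi> + norm w" by (rule norm_triangle_ineq4)
  hence "(1-t) * norm (\<xi> - w) \<le> (1-t) * (3/2)" using xi w(1) t1 by (intro mult_left_mono) auto
  finally have A: "norm (\<xi> - \<alpha>) \<le> (1-t)*(3/2)" .
  have "norm \<alpha> \<le> norm ((1 - t) *\<^sub>R w) + norm (t *\<^sub>R \<xi>)" using t(3) norm_triangle_ineq by metis
  also have "\<dots> = (1-t) * norm w + t" using t t1 xi by simp
  also have "(1-t) * norm w < (1-t) * (1/2)" using t1 w(1) by (intro mult_strict_left_mono) auto
  finally have B: "norm \<alpha> < (1-t)*(1/2) + t" by simp
  have A': "norm (\<xi> - \<alpha>) \<le> 3/2 - 3/2*t" using A by (simp add: algebra_simps)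
  have "(1-t)*(1/2) + t = 1/2 + t/2" by (simp add: field_simps)
  hence B': "norm \<alpha> < 1/2 + t/2" using B by linarith
  show ?thesis using A' B' t1 by argo
qed

lemma G2:
  fixes \<alpha> \<xi> z :: complex
  assumes eta: "0 < \<eta>" "\<eta> < 1" and a: "norm \<alpha> < 1" "norm (\<xi> - \<alpha>) \<le> 3*(1 - norm \<alpha>)"
    and z: "norm (z - \<alpha>) < \<eta>*(1 - norm \<alpha>)"
  shows "norm z < 1" "norm (\<xi> - z) \<le> (3+\<eta>)/(1-\<eta>) * (1 - norm z)"
    "(1-\<eta>)*(1-norm \<alpha>) < 1 - norm z" "1 - norm z < (1+\<eta>)*(1 - norm \<alpha>)"
proof -
  have n1: "norm z \<le> norm \<alpha> + norm (z - \<alpha>)" by (metis add.commute diff_add_cancel norm_triangle_ineq)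
  have n2: "norm \<alpha> \<le> norm z + norm (z - \<alpha>)" by (metis diff_add_cancel diff_diff_eq2 norm_minus_commute norm_triangle_ineq add.commute)
  have n3: "norm (\<xi> - z) \<le> norm (\<xi> - \<alpha>) + norm (z - \<alpha>)"
    by (metis diff_add_cancel diff_diff_eq2 norm_minus_commute norm_triangle_ineq add.commute)
  have p: "\<eta>*(1 - norm \<alpha>) < 1 - norm \<alpha>" using eta a by simp
  show "norm z < 1" using n1 z p by linarith
  show c: "(1-\<eta>)*(1-norm \<alpha>) < 1 - norm z" using n1 z by (simp add: algebra_simps)
  show "1 - norm z < (1+\<eta>)*(1 - norm \<alpha>)" using n2 z by (simp add: algebra_simps)
  have "norm (\<xi> - z) \<le> (3+\<eta>)*(1 - norm \<alpha>)" using n3 a z by (simp add: algebra_simps)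
  also have "\<dots> \<le> (3+\<eta>)/(1-\<eta>) * (1 - norm z)"
  proof -
    have "(3+\<eta>)*((1-\<eta>)*(1 - norm \<alpha>)) \<le> (3+\<eta>)*(1 - norm z)" using c eta by (intro mult_left_mono) auto
    thus ?thesis using eta by (simp add: field_simps)
  qed
  finally show "norm (\<xi> - z) \<le> (3+\<eta>)/(1-\<eta>) * (1 - norm z)" .
qed

lemma sets_area_m[simp, measurable_cong]: "sets area_m = sets borel"
  by (simp add: area_m_def)

lemma space_area_m[simp]: "space area_m = UNIV"
  by (simp add: area_m_def)

lemma emeasure_area_ball:
  assumes "0 \<le> r"
  shows "emeasure area_m (ball (c::complex) r) = ennreal (r^2)"
proof -
  have "emeasure area_m (ball c r) = (\<integral>\<^sup>+ x. ennreal (1/pi) * indicator (ball c r) x \<partial>lborel)"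
    unfolding area_m_def by (rule emeasure_density) auto
  also have "\<dots> = ennreal (1/pi) * emeasure lborel (ball c r)"
    by (rule nn_integral_cmult_indicator) auto
  also have "\<dots> = ennreal (1/pi) * ennreal (pi * r^2)"
    using emeasure_ball[where c=c and r=r] assms by (simp add: unit_ball_vol_2)
  also have "\<dots> = ennreal (r^2)" using assms by (simp flip: ennreal_mult)
  finally show ?thesis .
qed

lemma measure_area_ball:
  assumes "0 \<le> r"
  shows "measure area_m (ball (c::complex) r) = r^2"
  using emeasure_area_ball[OF assms] by (simp add: measure_def)

lemma sf_area: "sigma_finite_measure area_m"
  unfolding area_m_def
  by (subst sigma_finite_measure.sigma_finite_iff_density_finite'[OF sigma_finite_lborel]) auto

lemma pair_area: "pair_sigma_finite area_m area_m"
  using sf_area by (simp add: pair_sigma_finite_def)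

lemma sets_area_pair: "sets (area_m \<Otimes>\<^sub>M area_m) = sets ((borel :: complex measure) \<Otimes>\<^sub>M (borel :: complex measure))"
  by (rule sets_pair_measure_cong) simp_all

lemma integral_le_nn:
  fixes H :: "complex \<Rightarrow> real"
  assumes "\<And>x. 0 \<le> H x" "H \<in> borel_measurable M"
  shows "ennreal (integral\<^sup>L M H) \<le> (\<integral>\<^sup>+ x. ennreal (H x) \<partial>M)"
proof (cases "integrable M H")
  case True
  then show ?thesis using assms by (subst nn_integral_eq_integral) auto
next
  case False
  then show ?thesis by (simp add: not_integrable_integral_eq)
qed


lemma main_bound:
  fixes \<eta> p \<epsilon> :: real and f :: "complex \<Rightarrow> complex" and \<xi> :: complex
  assumes eta: "0 < \<eta>" "\<eta> < 1" and p: "1 \<le> p" and eps: "0 < \<epsilon>"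
    and hol: "f holomorphic_on ball 0 1" and xi: "norm \<xi> = 1"
  defines "K \<equiv> (3+\<eta>)/(1-\<eta>)"
  defines "A \<equiv> {\<alpha>. norm \<alpha> < 1 \<and>
                   norm (f \<alpha>) powr p <
                     \<epsilon> / measure area_m (Delta_reg \<eta> \<alpha>) *
                     (LINT z:Delta_reg \<eta> \<alpha>|area_m. norm (f z) powr p)}"
  shows "(\<integral>\<^sup>+ z\<in>A \<inter> Gamma_reg (1/2) \<xi>. ennreal (norm (f z) powr p / (1 - norm z)) \<partial>area_m)
          \<le> ennreal (\<epsilon> * ((1+\<eta>)^3/(1-\<eta>)^2)) *
            (\<integral>\<^sup>+ z\<in>Gamma_reg (1 - 1/(4*K^2)) \<xi>. ennreal (norm (f z) powr p / (1 - norm z)) \<partial>area_m)"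
proof -
  define C1 where "C1 = (1+\<eta>)^3/(1-\<eta>)^2"
  define \<beta> where "\<beta> = 1 - 1/(4*K^2)"
  define g where "g z = indicator (ball 0 1) z *\<^sub>R f z" for z
  have g_meas[measurable]: "g \<in> borel_measurable borel"
    unfolding g_def using hol
    by (intro borel_measurable_continuous_on_indicator) (auto intro: holomorphic_on_imp_continuous_on)
  have gp[measurable]: "(\<lambda>x. norm (g x) powr p) \<in> borel_measurable borel"
  proof -
    have "(\<lambda>x. norm (g x)) \<in> borel_measurable borel"
      using measurable_compose[OF g_meas borel_measurable_norm] by (simp add: o_def)
    thus ?thesis by (intro powr_real_measurable) auto
  qed
  have gf: "g z = f z" if "norm z < 1" for z using that by (simp add: g_def)
  define S where "S = {\<alpha>::complex. norm \<alpha> < 1 \<and> norm (\<xi> - \<alpha>) \<le> 3*(1 - norm \<alpha>)}"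
  define cond where "cond \<alpha> z \<longleftrightarrow> norm \<alpha> < 1 \<and> norm (\<xi> - \<alpha>) \<le> 3*(1 - norm \<alpha>) \<and> norm (z - \<alpha>) < \<eta>*(1 - norm \<alpha>)" for \<alpha> z :: complex
  define F where "F \<alpha> z = ennreal (if cond \<alpha> z then \<epsilon>/(\<eta>^2*(1-norm \<alpha>)^3) * norm (g z) powr p else 0)" for \<alpha> z
  define T where "T = (\<Union>\<alpha>\<in>S. ball \<alpha> (\<eta>*(1 - norm \<alpha>)))"
  have T_open: "open T" unfolding T_def by auto
  have T_iff: "z \<in> T \<longleftrightarrow> (\<exists>\<alpha>. cond \<alpha> z)" for z
    unfolding T_def S_def cond_def by (auto simp: dist_norm norm_minus_commute)
  have F_meas: "case_prod F \<in> borel_measurable (area_m \<Otimes>\<^sub>M area_m)"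
  proof -
    have "case_prod F \<in> borel_measurable ((borel :: complex measure) \<Otimes>\<^sub>M (borel :: complex measure))"
      unfolding F_def cond_def by measurable
    thus ?thesis by (subst measurable_cong_sets[OF sets_area_pair refl])
  qed
  define Delta where "Delta \<alpha> = Delta_reg \<eta> \<alpha>" for \<alpha>
  have Delta_ball: "Delta_reg \<eta> \<alpha> = ball \<alpha> (\<eta>*(1 - norm \<alpha>))" for \<alpha>
    unfolding Delta_reg_def by (auto simp: dist_norm norm_minus_commute)
  have step1: "ennreal (norm (f \<alpha>) powr p / (1 - norm \<alpha>)) * indicator (A \<inter> Gamma_reg (1/2) \<xi>) \<alpha>
      \<le> (\<integral>\<^sup>+ z. F \<alpha> z \<partial>area_m)" for \<alpha>
  proof (cases "\<alpha> \<in> A \<inter> Gamma_reg (1/2) \<xi>")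
    case False thus ?thesis by simp
  next
    case True
    hence aA: "\<alpha> \<in> A" and aG: "\<alpha> \<in> Gamma_reg (1/2) \<xi>" by auto
    from G1[OF xi aG] have aS: "norm \<alpha> < 1" "norm (\<xi> - \<alpha>) \<le> 3*(1 - norm \<alpha>)" by auto
    define \<delta> where "\<delta> = 1 - norm \<alpha>"
    have d: "0 < \<delta>" using aS by (simp add: \<delta>_def)
    define r where "r = \<eta>*\<delta>"
    have r: "0 < r" using d eta by (simp add: r_def)
    define H where "H z = indicator (ball \<alpha> r) z * norm (g z) powr p" for z
    have [measurable]: "ball \<alpha> r \<in> sets borel" by simp
    have H_meas[measurable]: "H \<in> borel_measurable area_m"
      by (subst measurable_cong_sets[OF sets_area_m refl]) (unfold H_def, measurable)
    have H_nn: "0 \<le> H z" for z by (simp add: H_def)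
    define L where "L = (LINT z:Delta_reg \<eta> \<alpha>|area_m. norm (f z) powr p)"
    have LH: "L = integral\<^sup>L area_m H"
    proof -
      have "(\<lambda>z. indicator (Delta_reg \<eta> \<alpha>) z *\<^sub>R norm (f z) powr p) = H"
      proof
        fix z
        show "indicator (Delta_reg \<eta> \<alpha>) z *\<^sub>R norm (f z) powr p = H z"
        proof (cases "z \<in> ball \<alpha> r")
          case True
          hence "norm (z - \<alpha>) < \<eta>*(1 - norm \<alpha>)" by (simp add: r_def \<delta>_def dist_norm norm_minus_commute)
          hence "norm z < 1" using G2(1)[OF eta aS] by blast
          thus ?thesis using True by (simp add: H_def Delta_ball r_def \<delta>_def gf)
        next
          case False thus ?thesis by (simp add: H_def Delta_ball r_def \<delta>_def)
        qed
      qed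
      thus ?thesis unfolding L_def set_lebesgue_integral_def by simp
    qed
    have meas: "measure area_m (Delta_reg \<eta> \<alpha>) = r^2"
      using r by (simp add: Delta_ball measure_area_ball r_def \<delta>_def)
    have lt: "norm (f \<alpha>) powr p < \<epsilon> / r^2 * L"
      using aA unfolding A_def L_def by (simp add: meas)
    have L0: "0 \<le> L"
    proof -
      have "0 < \<epsilon> / r^2 * L" using lt by (smt (verit) powr_ge_zero)
      thus ?thesis using eps r by (auto simp: zero_less_divide_iff zero_less_mult_iff)
    qed
    define c where "c = \<epsilon>/(\<eta>^2*\<delta>^3)"
    have c0: "0 \<le> c" using eps eta d by (simp add: c_def)
    have "norm (f \<alpha>) powr p / \<delta> \<le> \<epsilon> / r^2 * L / \<delta>"
      using lt d by (intro divide_right_mono) auto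
    also have "\<epsilon> / r^2 * L / \<delta> = c * L"
      by (simp add: c_def r_def power2_eq_square power3_eq_cube field_simps)
    finally have "ennreal (norm (f \<alpha>) powr p / \<delta>) \<le> ennreal c * ennreal L"
      using c0 L0 by (simp add: ennreal_mult[symmetric] ennreal_leI)
    also have "\<dots> \<le> ennreal c * (\<integral>\<^sup>+ z. ennreal (H z) \<partial>area_m)"
      unfolding LH by (intro mult_left_mono integral_le_nn H_nn H_meas) auto
    also have "\<dots> = (\<integral>\<^sup>+ z. ennreal c * ennreal (H z) \<partial>area_m)"
      by (rule nn_integral_cmult[symmetric]) measurable
    also have "\<dots> = (\<integral>\<^sup>+ z. F \<alpha> z \<partial>area_m)"
    proof (rule nn_integral_cong)
      fix z
      have "cond \<alpha> z \<longleftrightarrow> z \<in> ball \<alpha> r"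
        using aS by (simp add: cond_def r_def \<delta>_def dist_norm norm_minus_commute)
      thus "ennreal c * ennreal (H z) = F \<alpha> z"
        using c0 by (simp add: F_def H_def c_def \<delta>_def ennreal_mult[symmetric])
    qed
    finally show ?thesis using True by (simp add: \<delta>_def)
  qed
  have step3: "(\<integral>\<^sup>+ \<alpha>. F \<alpha> z \<partial>area_m) \<le> ennreal (\<epsilon> * C1) * ennreal (indicator T z * (norm (g z) powr p / (1 - norm z)))" for z
  proof (cases "z \<in> T")
    case False
    hence "F \<alpha> z = 0" for \<alpha> using T_iff by (auto simp: F_def)
    thus ?thesis by simp
  next
    case True
    then obtain \<alpha>0 where c0: "cond \<alpha>0 z" using T_iff by auto
    have z1: "norm z < 1" using c0 G2(1)[OF eta] by (auto simp: cond_def)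
    define \<delta> where "\<delta> = 1 - norm z"
    have d: "0 < \<delta>" using z1 by (simp add: \<delta>_def)
    define R where "R = \<eta>*\<delta>/(1-\<eta>)"
    have R: "0 \<le> R" using d eta by (simp add: R_def)
    define Kc where "Kc = \<epsilon>*(1+\<eta>)^3/(\<eta>^2*\<delta>^3) * norm (g z) powr p"
    have Kc0: "0 \<le> Kc" using eps eta d by (simp add: Kc_def)
    have pw: "F \<alpha> z \<le> ennreal Kc * indicator (ball z R) \<alpha>" for \<alpha>
    proof (cases "cond \<alpha> z")
      case False thus ?thesis by (simp add: F_def)
    next
      case True
      hence a: "norm \<alpha> < 1" "norm (\<xi> - \<alpha>) \<le> 3*(1 - norm \<alpha>)" "norm (z - \<alpha>) < \<eta>*(1 - norm \<alpha>)"
        by (auto simp: cond_def)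
      note g2 = G2[OF eta a]
      have h: "\<eta>*((1-\<eta>)*(1-norm \<alpha>)) \<le> \<eta>*\<delta>" using g2(3) eta by (intro mult_left_mono) (auto simp: \<delta>_def)
      have "\<eta>*(1 - norm \<alpha>) = \<eta>*((1-\<eta>)*(1-norm \<alpha>))/(1-\<eta>)" using eta by simp
      also have "\<dots> \<le> \<eta>*\<delta>/(1-\<eta>)" using h eta by (intro divide_right_mono) auto
      finally have "\<eta>*(1 - norm \<alpha>) \<le> R" by (simp add: R_def)
      hence inb: "\<alpha> \<in> ball z R" using a(3) by (simp add: dist_norm)
      have pos: "0 < 1 - norm \<alpha>" using a by simp
      have "(\<delta>/(1+\<eta>))^3 \<le> (1 - norm \<alpha>)^3"
        using g2(4) eta d by (intro power_mono) (auto simp: \<delta>_def field_simps)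
      hence "\<epsilon>/(\<eta>^2*(1-norm \<alpha>)^3) \<le> \<epsilon>/(\<eta>^2*(\<delta>/(1+\<eta>))^3)"
        using eps eta d pos by (intro divide_left_mono mult_left_mono mult_pos_pos) auto
      also have "\<dots> = \<epsilon>*(1+\<eta>)^3/(\<eta>^2*\<delta>^3)"
        using eta by (simp add: power_divide field_simps)
      finally have "\<epsilon>/(\<eta>^2*(1-norm \<alpha>)^3) * norm (g z) powr p \<le> Kc"
        unfolding Kc_def by (intro mult_right_mono) auto
      thus ?thesis using True inb by (simp add: F_def ennreal_leI)
    qed
    have "(\<integral>\<^sup>+ \<alpha>. F \<alpha> z \<partial>area_m) \<le> (\<integral>\<^sup>+ \<alpha>. ennreal Kc * indicator (ball z R) \<alpha> \<partial>area_m)"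
      by (intro nn_integral_mono pw)
    also have "\<dots> = ennreal Kc * emeasure area_m (ball z R)"
      by (rule nn_integral_cmult_indicator) simp
    also have "\<dots> = ennreal (Kc * R^2)"
      using Kc0 R by (simp add: emeasure_area_ball ennreal_mult)
    also have "Kc * R^2 = (\<epsilon> * C1) * (indicator T z * (norm (g z) powr p / (1 - norm z)))"
    proof -
      define G where "G = norm (g z) powr p"
      have ne: "\<delta> \<noteq> 0" "\<eta> \<noteq> 0" "1 - \<eta> \<noteq> 0" using d eta by auto
      have "Kc * R^2 = (\<epsilon> * C1) * (G / \<delta>)"
        unfolding Kc_def R_def C1_def G_def[symmetric] using ne
        by (simp add: power_divide power_mult_distrib divide_simps) (simp add: power2_eq_square power3_eq_cube algebra_simps)
      thus ?thesis using True by (simp add: G_def \<delta>_def)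
    qed
    also have "ennreal \<dots> = ennreal (\<epsilon> * C1) * ennreal (indicator T z * (norm (g z) powr p / (1 - norm z)))"
      using eps eta z1 by (intro ennreal_mult) (auto simp: C1_def)
    finally show ?thesis .
  qed
  have TG: "z \<in> Gamma_reg \<beta> \<xi> \<and> norm z < 1" if zT: "z \<in> T" for z
  proof -
    obtain \<alpha> where "cond \<alpha> z" using zT T_iff by auto
    hence a: "norm \<alpha> < 1" "norm (\<xi> - \<alpha>) \<le> 3*(1 - norm \<alpha>)" "norm (z - \<alpha>) < \<eta>*(1 - norm \<alpha>)"
      by (auto simp: cond_def)
    note g2 = G2[OF eta a]
    have K1: "K \<ge> 1" using eta by (simp add: K_def field_simps)
    show ?thesis using stolz_in_Gamma[OF xi g2(1) _ K1] g2(1,2) by (simp add: \<beta>_def K_def)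
  qed
  have "(\<integral>\<^sup>+ z\<in>A \<inter> Gamma_reg (1/2) \<xi>. ennreal (norm (f z) powr p / (1 - norm z)) \<partial>area_m)
      \<le> (\<integral>\<^sup>+ \<alpha>. (\<integral>\<^sup>+ z. F \<alpha> z \<partial>area_m) \<partial>area_m)"
    by (intro nn_integral_mono step1)
  also have "\<dots> = (\<integral>\<^sup>+ z. (\<integral>\<^sup>+ \<alpha>. F \<alpha> z \<partial>area_m) \<partial>area_m)"
    using pair_sigma_finite.Fubini'[OF pair_area F_meas] by simp
  also have "\<dots> \<le> (\<integral>\<^sup>+ z. ennreal (\<epsilon> * C1) * ennreal (indicator T z * (norm (g z) powr p / (1 - norm z))) \<partial>area_m)"
    by (intro nn_integral_mono step3)
  also have "\<dots> = ennreal (\<epsilon> * C1) * (\<integral>\<^sup>+ z. ennreal (indicator T z * (norm (g z) powr p / (1 - norm z))) \<partial>area_m)"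
  proof (rule nn_integral_cmult)
    have Tm[measurable]: "T \<in> sets borel" using T_open by auto
    show "(\<lambda>z. ennreal (indicator T z * (norm (g z) powr p / (1 - norm z)))) \<in> borel_measurable area_m"
      by (subst measurable_cong_sets[OF sets_area_m refl]) measurable
  qed
  also have "\<dots> \<le> ennreal (\<epsilon> * C1) * (\<integral>\<^sup>+ z\<in>Gamma_reg \<beta> \<xi>. ennreal (norm (f z) powr p / (1 - norm z)) \<partial>area_m)"
  proof (intro mult_left_mono nn_integral_mono)
    fix z
    show "ennreal (indicator T z * (norm (g z) powr p / (1 - norm z)))
          \<le> ennreal (norm (f z) powr p / (1 - norm z)) * indicator (Gamma_reg \<beta> \<xi>) z"
    proof (cases "z \<in> T")
      case True thus ?thesis using TG[OF True] gf by simp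
    next
      case False thus ?thesis by simp
    qed
  qed simp
  finally show ?thesis unfolding C1_def \<beta>_def .
qed


theorem lemma3:
  fixes \<eta> :: real
  assumes "0 < \<eta>" and "\<eta> < 1"
  shows "\<exists>\<beta> C1. 1/2 < \<beta> \<and> \<beta> < 1 \<and> 0 < C1 \<and>
    (\<forall>(p::real) (\<epsilon>::real) (f::complex \<Rightarrow> complex) (\<xi>::complex).
      1 \<le> p \<longrightarrow> 0 < \<epsilon> \<longrightarrow> f holomorphic_on ball 0 1 \<longrightarrow> norm \<xi> = 1 \<longrightarrow>
      (let A = {\<alpha>. norm \<alpha> < 1 \<and>
                   norm (f \<alpha>) powr p <
                     \<epsilon> / measure area_m (Delta_reg \<eta> \<alpha>) *
                     (LINT z:Delta_reg \<eta> \<alpha>|area_m. norm (f z) powr p)}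
       in (\<integral>\<^sup>+ z\<in>A \<inter> Gamma_reg (1/2) \<xi>. ennreal (norm (f z) powr p / (1 - norm z)) \<partial>area_m)
          \<le> ennreal (\<epsilon> * C1) *
            (\<integral>\<^sup>+ z\<in>Gamma_reg \<beta> \<xi>. ennreal (norm (f z) powr p / (1 - norm z)) \<partial>area_m)))"
proof -
  define K where "K = (3+\<eta>)/(1-\<eta>)"
  have K3: "K \<ge> 3" using assms by (simp add: K_def field_simps)
  have K2: "K^2 \<ge> 9" using power_mono[OF K3, of 2] by simp
  have b1: "1/2 < 1 - 1/(4*K^2)" and b2: "1 - 1/(4*K^2) < 1"
  proof -
    have "1/(4*K^2) \<le> 1/36" using K2 by (intro divide_left_mono) auto
    moreover have "0 < 1/(4*K^2)" using K3 by simp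
    ultimately show "1/2 < 1 - 1/(4*K^2)" "1 - 1/(4*K^2) < 1" by linarith+
  qed
  have c: "0 < (1+\<eta>)^3/(1-\<eta>)^2" using assms by simp
  show ?thesis
    apply (rule exI[of _ "1 - 1/(4*K^2)"], rule exI[of _ "(1+\<eta>)^3/(1-\<eta>)^2"])
    using b1 b2 c main_bound[OF assms] unfolding Let_def K_def by blast
qed

end
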